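(* Let $\mathsf k$ be a field, $t>2$, and $Y$ a $t$-connected ladder with lower outside corners $S_w=(a_{w-1},b_w)$, $w=1,\dots,h+1$, and let $\mathfrak X=X_{S_1}\cdots X_{S_{h+1}}$. Let $\psi,\chi\colon\mathsf k[Y]_{\mathfrak X}\to\mathsf k[Y]_{\mathfrak X}$ be the $\mathsf k$-algebra homomorphisms defined on variables $X_{ij}\in Y$ by $$\psi(X_{ij})=X_{ij}+\sum_{\substack{r\ge1\\ u_1<\cdots<u_r\in U(i,j)}}\frac{X_{a_{u_1-1},j}X_{a_{u_2-1},b_{u_1}}\cdots X_{a_{u_r-1},b_{u_{r-1}}}X_{i,b_{u_r}}}{X_{S_{u_1}}X_{S_{u_2}}\cdots X_{S_{u_r}}},$$ $$\chi(X_{ij})=X_{ij}+\sum_{\substack{r\ge1\\ u_1<\cdots<u_r\in U(i,j)}}(-1)^r\frac{X_{a_{u_1-1},j}X_{a_{u_2-1},b_{u_1}}\cdots X_{a_{u_r-1},b_{u_{r-1}}}X_{i,b_{u_r}}}{X_{S_{u_1}}X_{S_{u_2}}\cdots X_{S_{u_r}}},$$ where $U(i,j)=\{w\in\mathbb N\mid i>a_{w-1}\text{ and }j>b_w\}$. Then $\psi$ and $\chi$ are mutually inverse automorphisms of $\mathsf k[Y]_{\mathfrak X}$.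
   Context: Let $X=(X_{ij})$ be an $m\times n$ matrix of indeterminates; identify $X_{pq}$ with $(p,q)$. A ladder is a subset $Y$ of the entries of $X$ such that whenever $X_{ij},X_{pq}\in Y$ with $i\le p$, $j\le q$, also $X_{iq},X_{pj}\in Y$; $X$ is the smallest matrix containing $Y$ and every row and column of $X$ meets $Y$. A subladder is a subset of $Y$ that is itself a ladder. A $t$-minor of $Y$ is a $t\times t$ minor of $X$ with all entries in $Y$. $Y$ is $t$-disconnected if there are nonempty subladders $Y',Y''$ with $Y=Y'\sqcup Y''$ and every $t$-minor of $Y$ in $Y'$ or $Y''$; otherwise $t$-connected. A lower outside corner of $Y$ is a point $(p,q)\in Y$ with $(p-1,q)\notin Y$ and $(p,q-1)\notin Y$; these are listed as $S_1,\dots,S_{h+1}$ in order of increasing row index (so decreasing column index) and written $S_w=(a_{w-1},b_w)$; $X_{S_w}$ is the variable at $S_w$. $\mathsf k[Y]$ is the polynomial ring in the variables of $Y$; all variables appearing in the formulas for $\psi,\chi$ lie in $Y$, and $\psi(X_{S_w})=\chi(X_{S_w})=X_{S_w}$ since $U(S_w)=\varnothing$. *)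

theory Defs
  imports Main "HOL-Library.Poly_Mapping"
begin

text \<open>Entries of the m x n matrix X are pairs (p,q) with 1 <= p <= m, 1 <= q <= n.\<close>

definition ladder_closed :: "(nat \<times> nat) set \<Rightarrow> bool" where
  "ladder_closed Y \<longleftrightarrow>
     (\<forall>i j p q. (i,j) \<in> Y \<longrightarrow> (p,q) \<in> Y \<longrightarrow> i \<le> p \<longrightarrow> j \<le> q \<longrightarrow> (i,q) \<in> Y \<and> (p,j) \<in> Y)"

text \<open>Y is a ladder whose smallest containing matrix is the m x n matrix X.\<close>
definition is_ladder :: "nat \<Rightarrow> nat \<Rightarrow> (nat \<times> nat) set \<Rightarrow> bool" where
  "is_ladder m n Y \<longleftrightarrow> ladder_closed Y \<and> Y \<subseteq> {1..m} \<times> {1..n}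
     \<and> (\<forall>p\<in>{1..m}. \<exists>q. (p,q) \<in> Y) \<and> (\<forall>q\<in>{1..n}. \<exists>p. (p,q) \<in> Y)"

definition subladder :: "(nat \<times> nat) set \<Rightarrow> (nat \<times> nat) set \<Rightarrow> bool" where
  "subladder Y' Y \<longleftrightarrow> Y' \<subseteq> Y \<and> ladder_closed Y'"

definition t_minor :: "nat \<Rightarrow> (nat \<times> nat) set \<Rightarrow> nat set \<Rightarrow> nat set \<Rightarrow> bool" where
  "t_minor t Y R C \<longleftrightarrow> finite R \<and> finite C \<and> card R = t \<and> card C = t \<and> R \<times> C \<subseteq> Y"

definition t_disconnected :: "nat \<Rightarrow> (nat \<times> nat) set \<Rightarrow> bool" where
  "t_disconnected t Y \<longleftrightarrow>
     (\<exists>Y' Y''. subladder Y' Y \<and> subladder Y'' Y \<and> Y' \<noteq> {} \<and> Y'' \<noteq> {}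
        \<and> Y = Y' \<union> Y'' \<and> Y' \<inter> Y'' = {}
        \<and> (\<forall>R C. t_minor t Y R C \<longrightarrow> R \<times> C \<subseteq> Y' \<or> R \<times> C \<subseteq> Y''))"

definition t_connected :: "nat \<Rightarrow> (nat \<times> nat) set \<Rightarrow> bool" where
  "t_connected t Y \<longleftrightarrow> \<not> t_disconnected t Y"

definition lower_outside_corners :: "(nat \<times> nat) set \<Rightarrow> (nat \<times> nat) set" where
  "lower_outside_corners Y = {(p,q) \<in> Y. (p - 1, q) \<notin> Y \<and> (p, q - 1) \<notin> Y}"

text \<open>We work inside the Laurent polynomial ring in the variables X_(p,q)
  (exponent vectors are finitely supported integer functions); k[Y]_\<XX> is the
  subring of Laurent polynomials involving only variables of Y, where only the
  corner variables X_(S_w) may appear with negative exponents.\<close>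

type_synonym 'k laurent = "((nat \<times> nat) \<Rightarrow>\<^sub>0 int) \<Rightarrow>\<^sub>0 'k"

definition Var :: "nat \<times> nat \<Rightarrow> 'k::comm_ring_1 laurent" where
  "Var v = Poly_Mapping.single (Poly_Mapping.single v 1) 1"

definition VarInv :: "nat \<times> nat \<Rightarrow> 'k::comm_ring_1 laurent" where
  "VarInv v = Poly_Mapping.single (Poly_Mapping.single v (-1)) 1"

definition const :: "'k \<Rightarrow> 'k::comm_ring_1 laurent" where
  "const c = Poly_Mapping.single 0 c"

definition loc_ring :: "(nat \<times> nat) set \<Rightarrow> (nat \<times> nat) set \<Rightarrow> 'k::comm_ring_1 laurent set" where
  "loc_ring Y Cs = {p :: 'k laurent. \<forall>e \<in> Poly_Mapping.keys p. (\<forall>v \<in> Poly_Mapping.keys e. v \<in> Y) \<and> (\<forall>v. Poly_Mapping.lookup e v < 0 \<longrightarrow> v \<in> Cs)}"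

text \<open>The k-algebra endomorphism of k[Y]_\<XX> sending X_v to f v, for f fixing the
  (inverted) corner variables: negative powers of X_v are sent to negative powers of X_v.\<close>
definition subst :: "(nat \<times> nat \<Rightarrow> 'k::comm_ring_1 laurent) \<Rightarrow> 'k laurent \<Rightarrow> 'k laurent" where
  "subst f p = (\<Sum>e \<in> Poly_Mapping.keys p. const (Poly_Mapping.lookup p e) *
      (\<Prod>v \<in> Poly_Mapping.keys e. if Poly_Mapping.lookup e v \<ge> 0 then f v ^ nat (Poly_Mapping.lookup e v)
                      else VarInv v ^ nat (- Poly_Mapping.lookup e v)))"

definition is_k_alg_hom_on :: "'k::comm_ring_1 laurent set \<Rightarrow> ('k laurent \<Rightarrow> 'k laurent) \<Rightarrow> bool" where
  "is_k_alg_hom_on A g \<longleftrightarrow> g 1 = 1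
     \<and> (\<forall>x\<in>A. \<forall>y\<in>A. g (x + y) = g x + g y \<and> g (x * y) = g x * g y)
     \<and> (\<forall>c. \<forall>x\<in>A. g (const c * x) = const c * g x)"

text \<open>Corners S_w = (a_(w-1), b_w), w = 1..h+1, so a_(w-1) = fst (S w), b_w = snd (S w).
  For u_1 < ... < u_r, the term
  X_(a_(u1-1), j) X_(a_(u2-1), b_u1) ... X_(a_(ur-1), b_(u(r-1))) X_(i, b_ur) / (X_S_u1 ... X_S_ur)
  is chain_term S i j [u_1,...,u_r].\<close>
fun chain_term :: "(nat \<Rightarrow> nat \<times> nat) \<Rightarrow> nat \<Rightarrow> nat \<Rightarrow> nat list \<Rightarrow> 'k::comm_ring_1 laurent" where
  "chain_term S i c [] = Var (i, c)"
| "chain_term S i c (u # us) = Var (fst (S u), c) * VarInv (S u) * chain_term S i (snd (S u)) us"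

definition U_set :: "(nat \<Rightarrow> nat \<times> nat) \<Rightarrow> nat \<Rightarrow> nat \<Rightarrow> nat \<Rightarrow> nat set" where
  "U_set S h i j = {w \<in> {1..h+1}. i > fst (S w) \<and> j > snd (S w)}"

definition img :: "'k::comm_ring_1 \<Rightarrow> (nat \<Rightarrow> nat \<times> nat) \<Rightarrow> nat \<Rightarrow> nat \<times> nat \<Rightarrow> 'k laurent" where
  "img sg S h v = (case v of (i, j) \<Rightarrow>
     Var (i, j) + (\<Sum>A \<in> Pow (U_set S h i j) - {{}}.
        const (sg ^ card A) * chain_term S i j (sorted_list_of_set A)))"

definition psi :: "(nat \<Rightarrow> nat \<times> nat) \<Rightarrow> nat \<Rightarrow> 'k::comm_ring_1 laurent \<Rightarrow> 'k laurent" where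
  "psi S h = subst (img 1 S h)"

definition chi :: "(nat \<Rightarrow> nat \<times> nat) \<Rightarrow> nat \<Rightarrow> 'k::comm_ring_1 laurent \<Rightarrow> 'k laurent" where
  "chi S h = subst (img (-1) S h)"

end

theory Submission
  imports Defs
begin

lemma pm_expand:
  fixes p :: "'a \<Rightarrow>\<^sub>0 'b::comm_monoid_add"
  shows "p = (\<Sum>e\<in>Poly_Mapping.keys p. Poly_Mapping.single e (Poly_Mapping.lookup p e))"
proof -
  have *: "finite K \<Longrightarrow> Poly_Mapping.lookup (\<Sum>e\<in>K. Poly_Mapping.single e (Poly_Mapping.lookup p e)) x
     = (if x \<in> K then Poly_Mapping.lookup p x else 0)" for K x
    by (induction K rule: finite_induct) (auto simp: lookup_single lookup_add lookup_sum when_def)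
  show ?thesis
    by (rule poly_mapping_eqI) (simp add: * in_keys_iff)
qed

definition phi :: "(nat \<times> nat \<Rightarrow> 'k::comm_ring_1 laurent) \<Rightarrow> nat \<times> nat \<Rightarrow> int \<Rightarrow> 'k laurent" where
  "phi f v k = (if k \<ge> 0 then f v ^ nat k else VarInv v ^ nat (- k))"

definition mon :: "(nat \<times> nat \<Rightarrow> 'k::comm_ring_1 laurent) \<Rightarrow> ((nat \<times> nat) \<Rightarrow>\<^sub>0 int) \<Rightarrow> 'k laurent" where
  "mon f e = (\<Prod>v\<in>Poly_Mapping.keys e. phi f v (Poly_Mapping.lookup e v))"

lemma subst_alt: "subst f p = (\<Sum>e\<in>Poly_Mapping.keys p. const (Poly_Mapping.lookup p e) * mon f e)"
  by (simp add: subst_def mon_def phi_def)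

lemma phi_0[simp]: "phi f v 0 = 1" by (simp add: phi_def)

lemma mon_superset: "finite K \<Longrightarrow> Poly_Mapping.keys e \<subseteq> K \<Longrightarrow>
    mon f e = (\<Prod>v\<in>K. phi f v (Poly_Mapping.lookup e v))"
  unfolding mon_def
  by (rule prod.mono_neutral_left) (auto simp: in_keys_iff)

lemma const_0[simp]: "const 0 = 0" by (simp add: const_def)
lemma const_add: "const (a + b) = const a + const b" by (simp add: const_def single_add)
lemma const_mult: "const (a * b) = const a * const b" by (simp add: const_def mult_single)
lemma one_single: "(1 :: 'k::comm_ring_1 laurent) = Poly_Mapping.single 0 1"
  by (rule poly_mapping_eqI) (simp add: lookup_one lookup_single when_def)
lemma const_1[simp]: "const 1 = 1" unfolding const_def by (rule one_single[symmetric])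
lemma const_uminus: "const (- a) = - const a" by (simp add: const_def single_uminus)

lemma subst_superset: "finite K \<Longrightarrow> Poly_Mapping.keys p \<subseteq> K \<Longrightarrow>
    subst f p = (\<Sum>e\<in>K. const (Poly_Mapping.lookup p e) * mon f e)"
  unfolding subst_alt
  by (rule sum.mono_neutral_left) (auto simp: in_keys_iff)

lemma subst_add: "subst f (p + q) = subst f p + subst f q"
proof -
  let ?K = "Poly_Mapping.keys p \<union> Poly_Mapping.keys q"
  have "subst f (p + q) = (\<Sum>e\<in>?K. const (Poly_Mapping.lookup (p+q) e) * mon f e)"
    by (rule subst_superset) (auto simp: keys_add)
  also have "\<dots> = (\<Sum>e\<in>?K. const (Poly_Mapping.lookup p e) * mon f e)
     + (\<Sum>e\<in>?K. const (Poly_Mapping.lookup q e) * mon f e)"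
    by (simp add: lookup_add const_add distrib_right sum.distrib)
  also have "\<dots> = subst f p + subst f q"
    using subst_superset[of ?K p f] subst_superset[of ?K q f] by simp
  finally show ?thesis .
qed

lemma subst_zero[simp]: "subst f 0 = 0" by (simp add: subst_def)

lemma subst_single: "subst f (Poly_Mapping.single e c) = const c * mon f e"
  by (subst subst_superset[of "{e}"]) auto

lemma subst_sum: "subst f (\<Sum>i\<in>I. g i) = (\<Sum>i\<in>I. subst f (g i))"
  by (induction I rule: infinite_finite_induct) (auto simp: subst_add)

lemma mult_expand: "(p::'k::comm_ring_1 laurent) * q = (\<Sum>a\<in>Poly_Mapping.keys p. \<Sum>b\<in>Poly_Mapping.keys q.
    Poly_Mapping.single (a + b) (Poly_Mapping.lookup p a * Poly_Mapping.lookup q b))"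
proof -
  have "p * q = (\<Sum>e\<in>Poly_Mapping.keys p. Poly_Mapping.single e (Poly_Mapping.lookup p e)) *
     (\<Sum>e\<in>Poly_Mapping.keys q. Poly_Mapping.single e (Poly_Mapping.lookup q e))"
    using pm_expand[of p, symmetric] pm_expand[of q, symmetric] by (simp only:)
  then show ?thesis by (simp add: sum_product mult_single)
qed

lemma Var_pow: "Var v ^ n = Poly_Mapping.single (Poly_Mapping.single v (int n)) (1::'k::comm_ring_1)"
proof (induction n)
  case 0 then show ?case by (simp add: one_single[symmetric])
next
  case (Suc n)
  have "Var v ^ Suc n = Var v * Var v ^ n" by simp
  also have "\<dots> = Poly_Mapping.single (Poly_Mapping.single v 1 + Poly_Mapping.single v (int n)) (1::'k)"
    using Suc by (simp add: Var_def mult_single)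
  also have "Poly_Mapping.single v 1 + Poly_Mapping.single v (int n) = Poly_Mapping.single v (int (Suc n))"
    by (simp add: single_add[symmetric])
  finally show ?case .
qed

lemma VarInv_pow: "VarInv v ^ n = Poly_Mapping.single (Poly_Mapping.single v (- int n)) (1::'k::comm_ring_1)"
proof (induction n)
  case 0 then show ?case by (simp add: one_single[symmetric])
next
  case (Suc n)
  have "VarInv v ^ Suc n = VarInv v * VarInv v ^ n" by simp
  also have "\<dots> = Poly_Mapping.single (Poly_Mapping.single v (-1) + Poly_Mapping.single v (- int n)) (1::'k)"
    using Suc by (simp add: VarInv_def mult_single)
  also have "Poly_Mapping.single v (-1) + Poly_Mapping.single v (- int n) = Poly_Mapping.single v (- int (Suc n))"
    by (simp add: single_add[symmetric])
  finally show ?case .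
qed

lemma phi_Var_corner: "f v = Var v \<Longrightarrow> phi f v k = Poly_Mapping.single (Poly_Mapping.single v k) 1"
  by (auto simp: phi_def Var_pow VarInv_pow)

lemma phi_add:
  assumes "(x \<ge> 0 \<and> y \<ge> 0) \<or> f v = Var v"
  shows "phi f v (x + y) = phi f v x * phi f v y"
  using assms
proof
  assume "x \<ge> 0 \<and> y \<ge> 0"
  then show ?thesis by (simp add: phi_def nat_add_distrib power_add)
next
  assume "f v = Var v"
  then show ?thesis by (simp add: phi_Var_corner mult_single single_add)
qed



lemma loc_ringI: "(\<And>e v. e \<in> Poly_Mapping.keys p \<Longrightarrow> v \<in> Poly_Mapping.keys e \<Longrightarrow> v \<in> Y) \<Longrightarrow>
  (\<And>e v. e \<in> Poly_Mapping.keys p \<Longrightarrow> Poly_Mapping.lookup e v < 0 \<Longrightarrow> v \<in> Cs) \<Longrightarrow> p \<in> loc_ring Y Cs"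
  unfolding loc_ring_def mem_Collect_eq by (intro ballI conjI allI impI)

lemma loc_ringD1: "p \<in> loc_ring Y Cs \<Longrightarrow> e \<in> Poly_Mapping.keys p \<Longrightarrow> v \<in> Poly_Mapping.keys e \<Longrightarrow> v \<in> Y"
  unfolding loc_ring_def mem_Collect_eq by (drule bspec, assumption, erule conjE, erule bspec, assumption)

lemma loc_ringD2: "p \<in> loc_ring Y Cs \<Longrightarrow> e \<in> Poly_Mapping.keys p \<Longrightarrow> Poly_Mapping.lookup e v < 0 \<Longrightarrow> v \<in> Cs"
  unfolding loc_ring_def mem_Collect_eq by (drule bspec, assumption, erule conjE, erule allE, erule mp, assumption)

lemmas loc_ringD = loc_ringD1 loc_ringD2

lemma loc_ring_add:
  assumes p: "p \<in> loc_ring Y Cs" and q: "q \<in> loc_ring Y Cs" shows "p + q \<in> loc_ring Y Cs"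
proof (rule loc_ringI)
  fix e v assume e: "e \<in> Poly_Mapping.keys (p + q)" and v: "v \<in> Poly_Mapping.keys e"
  have "e \<in> Poly_Mapping.keys p \<or> e \<in> Poly_Mapping.keys q" using keys_add[of p q] e by auto
  then show "v \<in> Y"
  proof
    assume "e \<in> Poly_Mapping.keys p" then show ?thesis using loc_ringD1[OF p _ v] by simp
  next
    assume "e \<in> Poly_Mapping.keys q" then show ?thesis using loc_ringD1[OF q _ v] by simp
  qed
next
  fix e v assume e: "e \<in> Poly_Mapping.keys (p + q)" and v: "Poly_Mapping.lookup e v < 0"
  have "e \<in> Poly_Mapping.keys p \<or> e \<in> Poly_Mapping.keys q" using keys_add[of p q] e by auto
  then show "v \<in> Cs"
  proof
    assume "e \<in> Poly_Mapping.keys p" then show ?thesis using loc_ringD2[OF p _ v] by simp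
  next
    assume "e \<in> Poly_Mapping.keys q" then show ?thesis using loc_ringD2[OF q _ v] by simp
  qed
qed

lemma loc_ring_zero: "0 \<in> loc_ring Y Cs" by (simp add: loc_ring_def)

lemma loc_ring_uminus: "p \<in> loc_ring Y Cs \<Longrightarrow> - p \<in> loc_ring Y Cs"
  unfolding loc_ring_def keys_def by simp

lemma loc_ring_mult:
  assumes p: "p \<in> loc_ring Y Cs" and q: "q \<in> loc_ring Y Cs" shows "p * q \<in> loc_ring Y Cs"
proof (rule loc_ringI)
  fix e v assume e: "e \<in> Poly_Mapping.keys (p * q)" and v: "v \<in> Poly_Mapping.keys e"
  obtain a b where ab: "e = a + b" "a \<in> Poly_Mapping.keys p" "b \<in> Poly_Mapping.keys q"
    using keys_mult[of p q] e by blast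
  have "v \<in> Poly_Mapping.keys a \<or> v \<in> Poly_Mapping.keys b" using ab(1) keys_add[of a b] v by auto
  then show "v \<in> Y"
  proof
    assume "v \<in> Poly_Mapping.keys a" then show ?thesis using loc_ringD1[OF p ab(2)] by simp
  next
    assume "v \<in> Poly_Mapping.keys b" then show ?thesis using loc_ringD1[OF q ab(3)] by simp
  qed
next
  fix e v assume e: "e \<in> Poly_Mapping.keys (p * q)" and v: "Poly_Mapping.lookup e v < 0"
  obtain a b where ab: "e = a + b" "a \<in> Poly_Mapping.keys p" "b \<in> Poly_Mapping.keys q"
    using keys_mult[of p q] e by blast
  have "Poly_Mapping.lookup a v < 0 \<or> Poly_Mapping.lookup b v < 0" using ab(1) v by (auto simp: lookup_add)
  then show "v \<in> Cs"
  proof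
    assume "Poly_Mapping.lookup a v < 0" then show ?thesis using loc_ringD2[OF p ab(2)] by simp
  next
    assume "Poly_Mapping.lookup b v < 0" then show ?thesis using loc_ringD2[OF q ab(3)] by simp
  qed
qed

lemma loc_ring_const: "const c \<in> loc_ring Y Cs"
proof -
  have "Poly_Mapping.keys (const c) \<subseteq> {0}" by (simp add: const_def)
  then show ?thesis by (intro loc_ringI) auto
qed

lemma loc_ring_one: "1 \<in> loc_ring Y Cs"
  using loc_ring_const[of 1] by simp

lemma loc_ring_Var: assumes that: "v \<in> Y" shows "(Var v :: 'k::field laurent) \<in> loc_ring Y Cs"
proof -
  have k: "Poly_Mapping.keys (Var v :: 'k laurent) = {Poly_Mapping.single v 1}" by (simp add: Var_def)
  have l: "Poly_Mapping.lookup (Poly_Mapping.single v (1::int)) w \<ge> 0" for w by (simp add: lookup_single when_def)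
  show ?thesis using l k by (intro loc_ringI) (auto simp: that leD)
qed

lemma loc_ring_VarInv: assumes "v \<in> Y" "v \<in> Cs" shows "(VarInv v :: 'k::field laurent) \<in> loc_ring Y Cs"
proof -
  have k: "Poly_Mapping.keys (VarInv v :: 'k laurent) = {Poly_Mapping.single v (-1)}" by (simp add: VarInv_def)
  have l: "Poly_Mapping.lookup (Poly_Mapping.single v (-1::int)) w < 0 \<Longrightarrow> w = v" for w by (simp add: lookup_single when_def split: if_splits)
  show ?thesis using l k assms by (intro loc_ringI) auto
qed

lemma loc_ring_sum: "(\<And>i. i \<in> I \<Longrightarrow> g i \<in> loc_ring Y Cs) \<Longrightarrow> (\<Sum>i\<in>I. g i) \<in> loc_ring Y Cs"
  by (induction I rule: infinite_finite_induct) (auto intro: loc_ring_add loc_ring_zero)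

lemma loc_ring_prod: "(\<And>i. i \<in> I \<Longrightarrow> g i \<in> loc_ring Y Cs) \<Longrightarrow> (\<Prod>i\<in>I. g i) \<in> loc_ring Y Cs"
  by (induction I rule: infinite_finite_induct) (auto intro: loc_ring_mult loc_ring_one)

lemma loc_ring_power: "p \<in> loc_ring Y Cs \<Longrightarrow> p ^ n \<in> loc_ring Y Cs"
  by (induction n) (auto intro: loc_ring_mult loc_ring_one)

lemma loc_ring_mono: "p \<in> loc_ring Y Cs \<Longrightarrow> p \<in> loc_ring UNIV Cs"
  by (auto simp: loc_ring_def)

lemma subst_closed:
  assumes p: "p \<in> loc_ring Y Cs" and Cs: "Cs \<subseteq> Y" and f: "\<And>v. v \<in> Y \<Longrightarrow> f v \<in> loc_ring Y Cs"
  shows "subst (f :: _ \<Rightarrow> 'k::field laurent) p \<in> loc_ring Y Cs"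
  unfolding subst_alt mon_def
proof (intro loc_ring_sum loc_ring_mult loc_ring_const loc_ring_prod)
  fix e v assume e: "e \<in> Poly_Mapping.keys p" and v: "v \<in> Poly_Mapping.keys e"
  have vY: "v \<in> Y" using loc_ringD(1)[OF p e v] .
  show "phi f v (Poly_Mapping.lookup e v) \<in> loc_ring Y Cs"
  proof (cases "Poly_Mapping.lookup e v \<ge> 0")
    case True then show ?thesis by (simp add: phi_def loc_ring_power f vY)
  next
    case False
    then have "v \<in> Cs" using loc_ringD(2)[OF p e] by simp
    with False Cs vY show ?thesis by (simp add: phi_def loc_ring_power loc_ring_VarInv)
  qed
qed

definition fixes_on :: "(nat \<times> nat) set \<Rightarrow> (nat \<times> nat \<Rightarrow> 'k::field laurent) \<Rightarrow> bool" where
  "fixes_on Cs f \<longleftrightarrow> (\<forall>v\<in>Cs. f v = Var v)"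

lemma mon_add:
  assumes f: "fixes_on Cs f"
    and a: "\<And>v. Poly_Mapping.lookup a v < 0 \<Longrightarrow> v \<in> Cs"
    and b: "\<And>v. Poly_Mapping.lookup b v < 0 \<Longrightarrow> v \<in> Cs"
  shows "mon f (a + b) = mon f a * mon f b"
proof -
  let ?K = "Poly_Mapping.keys a \<union> Poly_Mapping.keys b"
  have "mon f (a + b) = (\<Prod>v\<in>?K. phi f v (Poly_Mapping.lookup (a+b) v))"
    by (rule mon_superset) (auto simp: keys_add)
  also have "\<dots> = (\<Prod>v\<in>?K. phi f v (Poly_Mapping.lookup a v) * phi f v (Poly_Mapping.lookup b v))"
  proof (rule prod.cong[OF refl])
    fix v
    have "(Poly_Mapping.lookup a v \<ge> 0 \<and> Poly_Mapping.lookup b v \<ge> 0) \<or> f v = Var v"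
      using a[of v] b[of v] f unfolding fixes_on_def by (metis linorder_not_less)
    then show "phi f v (Poly_Mapping.lookup (a + b) v) = phi f v (Poly_Mapping.lookup a v) * phi f v (Poly_Mapping.lookup b v)"
      by (simp add: lookup_add phi_add)
  qed
  also have "\<dots> = mon f a * mon f b"
    by (simp add: prod.distrib mon_superset[of ?K a] mon_superset[of ?K b])
  finally show ?thesis .
qed

lemma subst_mult:
  assumes f: "fixes_on Cs f" and p: "p \<in> loc_ring Y Cs" and q: "q \<in> loc_ring Y' Cs"
  shows "subst f (p * q) = subst f p * subst f q"
proof -
  have "subst f (p * q) = (\<Sum>a\<in>Poly_Mapping.keys p. \<Sum>b\<in>Poly_Mapping.keys q.
      const (Poly_Mapping.lookup p a * Poly_Mapping.lookup q b) * mon f (a + b))"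
    by (subst mult_expand) (simp add: subst_sum subst_single)
  also have "\<dots> = (\<Sum>a\<in>Poly_Mapping.keys p. \<Sum>b\<in>Poly_Mapping.keys q.
      (const (Poly_Mapping.lookup p a) * mon f a) * (const (Poly_Mapping.lookup q b) * mon f b))"
  proof (intro sum.cong refl)
    fix a b assume a: "a \<in> Poly_Mapping.keys p" and b: "b \<in> Poly_Mapping.keys q"
    have "mon f (a + b) = mon f a * mon f b"
      by (rule mon_add[OF f]) (auto intro: loc_ringD(2)[OF p a] loc_ringD(2)[OF q b])
    then show "const (Poly_Mapping.lookup p a * Poly_Mapping.lookup q b) * mon f (a + b) =
      (const (Poly_Mapping.lookup p a) * mon f a) * (const (Poly_Mapping.lookup q b) * mon f b)"
      by (simp add: const_mult algebra_simps)
  qed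
  also have "\<dots> = subst f p * subst f q"
    by (simp add: subst_alt sum_product)
  finally show ?thesis .
qed

lemma mon_zero[simp]: "mon f 0 = 1" by (simp add: mon_def)

lemma subst_const: "subst f (const c) = const c"
  unfolding const_def by (simp add: subst_single const_def)

lemma subst_one: "subst f 1 = 1"
  using subst_const[of f 1] by simp

lemma subst_Var: "subst f (Var v :: 'k::field laurent) = f v"
  unfolding Var_def by (simp add: subst_single mon_def phi_def)

lemma subst_VarInv: "subst f (VarInv v :: 'k::field laurent) = VarInv v"
  unfolding VarInv_def by (simp add: subst_single mon_def phi_def VarInv_def)

lemma subst_uminus: "subst f (- p) = - subst f p"
proof -
  have "subst f p + subst f (- p) = 0" using subst_add[of f p "-p"] by simp
  then show ?thesis by (simp add: eq_neg_iff_add_eq_0 add.commute)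
qed

lemma subst_diff: "subst f (p - q) = subst f p - subst f q"
  using subst_add[of f p "-q"] by (simp add: subst_uminus)

lemma subst_prod:
  assumes f: "fixes_on Cs f" and g: "\<And>i. i \<in> I \<Longrightarrow> g i \<in> loc_ring UNIV Cs"
  shows "subst f (\<Prod>i\<in>I. g i) = (\<Prod>i\<in>I. subst f (g i))"
  using g
proof (induction I rule: infinite_finite_induct)
  case (insert x F)
  have "subst f (g x * prod g F) = subst f (g x) * subst f (prod g F)"
    by (rule subst_mult[OF f]) (auto intro: insert.prems loc_ring_prod)
  with insert show ?case by simp
qed (auto simp: subst_one)

lemma subst_power:
  assumes f: "fixes_on Cs f" and g: "g \<in> loc_ring UNIV Cs"
  shows "subst f (g ^ n) = subst f g ^ n"
  using subst_prod[OF f, of "{..<n}" "\<lambda>_. g"] g by simp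

lemma subst_hom:
  assumes f: "fixes_on Cs (f :: _ \<Rightarrow> 'k::field laurent)"
  shows "is_k_alg_hom_on (loc_ring Y Cs) (subst f)"
  unfolding is_k_alg_hom_on_def
proof (intro conjI ballI allI)
  fix c :: 'k and x :: "'k laurent" assume x: "x \<in> loc_ring Y Cs"
  show "subst f (const c * x) = const c * subst f x"
    using subst_mult[OF f loc_ring_const x] by (simp add: subst_const)
qed (auto simp: subst_one subst_add subst_mult[OF f])

lemma subst_comp:
  assumes f: "fixes_on Cs f" and g: "\<And>v. g v \<in> loc_ring UNIV Cs" and p: "p \<in> loc_ring Y Cs"
  shows "subst f (subst g p) = subst (\<lambda>v. subst f (g v)) p"
proof -
  have mg: "subst f (mon g e) = mon (\<lambda>v. subst f (g v)) e"
    if e: "e \<in> Poly_Mapping.keys p" for e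
    unfolding mon_def
  proof (subst subst_prod[OF f], goal_cases)
    case (1 v)
    show ?case
    proof (cases "Poly_Mapping.lookup e v \<ge> 0")
      case True then show ?thesis by (simp add: phi_def loc_ring_power g)
    next
      case False
      then have "v \<in> Cs" using loc_ringD(2)[OF p e] by simp
      with False show ?thesis by (simp add: phi_def loc_ring_power loc_ring_VarInv)
    qed
  next
    case 2
    show ?case
    proof (rule prod.cong[OF refl])
      fix v
      show "subst f (phi g v (Poly_Mapping.lookup e v)) = phi (\<lambda>v. subst f (g v)) v (Poly_Mapping.lookup e v)"
      proof (cases "Poly_Mapping.lookup e v \<ge> 0")
        case True then show ?thesis by (simp add: phi_def subst_power[OF f g])
      next
        case False
        then have "v \<in> Cs" using loc_ringD(2)[OF p e] by simp
        with False show ?thesis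
          by (simp add: phi_def subst_power[OF f] loc_ring_VarInv subst_VarInv)
      qed
    qed
  qed
  have "subst f (subst g p) = (\<Sum>e\<in>Poly_Mapping.keys p. subst f (const (Poly_Mapping.lookup p e) * mon g e))"
    by (simp add: subst_alt[of g] subst_sum)
  also have "\<dots> = (\<Sum>e\<in>Poly_Mapping.keys p. const (Poly_Mapping.lookup p e) * mon (\<lambda>v. subst f (g v)) e)"
  proof (rule sum.cong[OF refl])
    fix e assume e: "e \<in> Poly_Mapping.keys p"
    have "mon g e \<in> loc_ring UNIV Cs"
      unfolding mon_def
    proof (rule loc_ring_prod)
      fix v show "phi g v (Poly_Mapping.lookup e v) \<in> loc_ring UNIV Cs"
      proof (cases "Poly_Mapping.lookup e v \<ge> 0")
        case True then show ?thesis by (simp add: phi_def loc_ring_power g)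
      next
        case False
        then have "v \<in> Cs" using loc_ringD(2)[OF p e] by simp
        with False show ?thesis by (simp add: phi_def loc_ring_power loc_ring_VarInv)
      qed
    qed
    then have "subst f (const (Poly_Mapping.lookup p e) * mon g e) = subst f (const (Poly_Mapping.lookup p e)) * subst f (mon g e)"
      by (rule subst_mult[OF f loc_ring_const])
    then show "subst f (const (Poly_Mapping.lookup p e) * mon g e) = const (Poly_Mapping.lookup p e) * mon (\<lambda>v. subst f (g v)) e"
      by (simp add: subst_const mg[OF e])
  qed
  also have "\<dots> = subst (\<lambda>v. subst f (g v)) p" by (simp add: subst_alt)
  finally show ?thesis .
qed

lemma prod_singles: "finite K \<Longrightarrow> (\<Prod>v\<in>K. Poly_Mapping.single (h v) (1::'k::comm_ring_1)) = Poly_Mapping.single (\<Sum>v\<in>K. h v) 1"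
  by (induction K rule: finite_induct) (simp_all add: mult_single one_single[symmetric])

lemma subst_Var_id: "subst (Var :: _ \<Rightarrow> 'k::field laurent) p = p"
proof -
  have m: "mon Var e = Poly_Mapping.single e (1::'k)" for e
  proof -
    have "mon Var e = (\<Prod>v\<in>Poly_Mapping.keys e. Poly_Mapping.single (Poly_Mapping.single v (Poly_Mapping.lookup e v)) (1::'k))"
      unfolding mon_def by (simp add: phi_Var_corner)
    also have "\<dots> = Poly_Mapping.single e 1"
      by (simp add: prod_singles pm_expand[of e, symmetric])
    finally show ?thesis .
  qed
  show ?thesis
    by (subst (2) pm_expand) (simp add: subst_alt m const_def mult_single)
qed



definition G :: "'k::field \<Rightarrow> (nat \<Rightarrow> nat \<times> nat) \<Rightarrow> nat \<Rightarrow> nat \<Rightarrow> nat set \<Rightarrow> 'k laurent" where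
  "G s S i c U = (\<Sum>A\<in>Pow U. const (s ^ card A) * chain_term S i c (sorted_list_of_set A))"

lemma finite_U: "finite (U_set S h i j)" by (simp add: U_set_def)

lemma img_G: "img s S h (i,j) = G s S i j (U_set S h i j)"
proof -
  have "G s S i j (U_set S h i j) = const (s ^ card {}) * chain_term S i j (sorted_list_of_set {})
     + (\<Sum>A\<in>Pow (U_set S h i j) - {{}}. const (s ^ card A) * chain_term S i j (sorted_list_of_set A))"
    unfolding G_def by (subst sum.remove[of _ "{}"]) (auto simp: finite_U)
  then show ?thesis by (simp add: img_def)
qed

lemma sorted_insert_min: "finite B \<Longrightarrow> \<forall>w\<in>B. u < w \<Longrightarrow>
    sorted_list_of_set (insert u (B::nat set)) = u # sorted_list_of_set B"
proof -
  assume B: "finite B" "\<forall>w\<in>B. u < w"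
  have s1: "sorted_wrt (<) (sorted_list_of_set (insert u B))" by (rule strict_sorted_list_of_set)
  have s2: "sorted_wrt (<) (u # sorted_list_of_set B)"
    using B by simp
  have "set (sorted_list_of_set (insert u B)) = insert u B"
    using B by (simp only: set_sorted_list_of_set finite_insert)
  then have "set (u # sorted_list_of_set B) = set (sorted_list_of_set (insert u B))"
    using B by simp
  then show ?thesis using strict_sorted_equal[OF s1 s2] by simp
qed

lemma sorted_insert_max: "finite B \<Longrightarrow> \<forall>w\<in>B. w < u \<Longrightarrow>
    sorted_list_of_set (insert u (B::nat set)) = sorted_list_of_set B @ [u]"
proof -
  assume B: "finite B" "\<forall>w\<in>B. w < u"
  have s1: "sorted_wrt (<) (sorted_list_of_set (insert u B))" by (rule strict_sorted_list_of_set)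
  have s2: "sorted_wrt (<) (sorted_list_of_set B @ [u])"
    using B by (simp add: sorted_wrt_append)
  have "set (sorted_list_of_set (insert u B)) = insert u B"
    using B by (simp only: set_sorted_list_of_set finite_insert)
  then have "set (sorted_list_of_set B @ [u]) = set (sorted_list_of_set (insert u B))"
    using B by simp
  then show ?thesis using strict_sorted_equal[OF s1 s2] by simp
qed

lemma chain_append: "chain_term S i c (us @ [u]) =
    chain_term S (fst (S u)) c us * VarInv (S u) * Var (i, snd (S u))"
  by (induction us arbitrary: c) (simp_all add: mult.assoc)

lemma pow_split_min:
  assumes U: "finite (U::nat set)"
  shows "(\<Sum>A\<in>Pow U. F A) = F {} + (\<Sum>u\<in>U. \<Sum>B\<in>Pow {w\<in>U. u < w}. F (insert u B))"
proof -
  let ?D = "\<lambda>u. insert u ` Pow {w\<in>U. u < w}"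
  have eq: "Pow U = insert {} (\<Union>u\<in>U. ?D u)"
  proof (rule set_eqI, rule iffI)
    fix A assume A: "A \<in> Pow U"
    show "A \<in> insert {} (\<Union>u\<in>U. ?D u)"
    proof (cases "A = {}")
      case False
      have fA: "finite A" using A U finite_subset by auto
      let ?u = "Min A"
      have uA: "?u \<in> A" using Min_in[OF fA False] .
      have "A = insert ?u (A - {?u})" using uA by auto
      moreover have "A - {?u} \<in> Pow {w\<in>U. ?u < w}"
        using A fA by (auto simp: order.not_eq_order_implies_strict)
      ultimately have "A \<in> ?D ?u" by blast
      then show ?thesis using uA A by blast
    qed simp
  next
    fix A assume "A \<in> insert {} (\<Union>u\<in>U. ?D u)"
    then show "A \<in> Pow U" by auto
  qed
  have ne: "{} \<notin> (\<Union>u\<in>U. ?D u)" by auto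
  have disj: "\<forall>u\<in>U. \<forall>u'\<in>U. u \<noteq> u' \<longrightarrow> ?D u \<inter> ?D u' = {}"
  proof (intro ballI impI)
    fix u u' :: nat assume "u \<noteq> u'"
    show "?D u \<inter> ?D u' = {}"
    proof (rule ccontr)
      assume "?D u \<inter> ?D u' \<noteq> {}"
      then obtain B B' where "insert u B = insert u' B'" "B \<in> Pow {w\<in>U. u < w}" "B' \<in> Pow {w\<in>U. u' < w}"
        by blast
      then have "u \<in> insert u' B'" "u' \<in> insert u B" by auto
      then have "u \<in> B'" "u' \<in> B" using \<open>u \<noteq> u'\<close> by auto
      then show False using \<open>B \<in> _\<close> \<open>B' \<in> _\<close> by (auto dest!: subsetD)
    qed
  qed
  have "(\<Sum>A\<in>Pow U. F A) = F {} + (\<Sum>A\<in>(\<Union>u\<in>U. ?D u). F A)"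
    unfolding eq using U ne by (subst sum.insert) auto
  also have "(\<Sum>A\<in>(\<Union>u\<in>U. ?D u). F A) = (\<Sum>u\<in>U. \<Sum>A\<in>?D u. F A)"
    using U disj by (subst sum.UNION_disjoint) auto
  also have "\<dots> = (\<Sum>u\<in>U. \<Sum>B\<in>Pow {w\<in>U. u < w}. F (insert u B))"
  proof (rule sum.cong[OF refl])
    fix u
    have "inj_on (insert u) (Pow {w\<in>U. u < w})"
      by (rule inj_onI) (metis (no_types, lifting) Pow_iff insert_ident less_irrefl mem_Collect_eq subsetD)
    then show "(\<Sum>A\<in>?D u. F A) = (\<Sum>B\<in>Pow {w\<in>U. u < w}. F (insert u B))"
      by (simp add: sum.reindex)
  qed
  finally show ?thesis .
qed

lemma pow_split_max:
  assumes U: "finite (U::nat set)"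
  shows "(\<Sum>A\<in>Pow U. F A) = F {} + (\<Sum>u\<in>U. \<Sum>B\<in>Pow {w\<in>U. w < u}. F (insert u B))"
proof -
  let ?D = "\<lambda>u. insert u ` Pow {w\<in>U. w < u}"
  have eq: "Pow U = insert {} (\<Union>u\<in>U. ?D u)"
  proof (rule set_eqI, rule iffI)
    fix A assume A: "A \<in> Pow U"
    show "A \<in> insert {} (\<Union>u\<in>U. ?D u)"
    proof (cases "A = {}")
      case False
      have fA: "finite A" using A U finite_subset by auto
      let ?u = "Max A"
      have uA: "?u \<in> A" using Max_in[OF fA False] .
      have "A = insert ?u (A - {?u})" using uA by auto
      moreover have "A - {?u} \<in> Pow {w\<in>U. w < ?u}"
        using A fA by (auto simp: order.not_eq_order_implies_strict)
      ultimately have "A \<in> ?D ?u" by blast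
      then show ?thesis using uA A by blast
    qed simp
  next
    fix A assume "A \<in> insert {} (\<Union>u\<in>U. ?D u)"
    then show "A \<in> Pow U" by auto
  qed
  have ne: "{} \<notin> (\<Union>u\<in>U. ?D u)" by auto
  have disj: "\<forall>u\<in>U. \<forall>u'\<in>U. u \<noteq> u' \<longrightarrow> ?D u \<inter> ?D u' = {}"
  proof (intro ballI impI)
    fix u u' :: nat assume "u \<noteq> u'"
    show "?D u \<inter> ?D u' = {}"
    proof (rule ccontr)
      assume "?D u \<inter> ?D u' \<noteq> {}"
      then obtain B B' where "insert u B = insert u' B'" "B \<in> Pow {w\<in>U. w < u}" "B' \<in> Pow {w\<in>U. w < u'}"
        by blast
      then have "u \<in> insert u' B'" "u' \<in> insert u B" by auto
      then have "u \<in> B'" "u' \<in> B" using \<open>u \<noteq> u'\<close> by auto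
      then show False using \<open>B \<in> _\<close> \<open>B' \<in> _\<close> by (auto dest!: subsetD)
    qed
  qed
  have "(\<Sum>A\<in>Pow U. F A) = F {} + (\<Sum>A\<in>(\<Union>u\<in>U. ?D u). F A)"
    unfolding eq using U ne by (subst sum.insert) auto
  also have "(\<Sum>A\<in>(\<Union>u\<in>U. ?D u). F A) = (\<Sum>u\<in>U. \<Sum>A\<in>?D u. F A)"
    using U disj by (subst sum.UNION_disjoint) auto
  also have "\<dots> = (\<Sum>u\<in>U. \<Sum>B\<in>Pow {w\<in>U. w < u}. F (insert u B))"
  proof (rule sum.cong[OF refl])
    fix u
    have "inj_on (insert u) (Pow {w\<in>U. w < u})"
      by (rule inj_onI) (metis (no_types, lifting) Pow_iff insert_ident less_irrefl mem_Collect_eq subsetD)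
    then show "(\<Sum>A\<in>?D u. F A) = (\<Sum>B\<in>Pow {w\<in>U. w < u}. F (insert u B))"
      by (simp add: sum.reindex)
  qed
  finally show ?thesis .
qed

lemma G_first:
  assumes U: "finite U"
  shows "G s S i c U = Var (i, c) + (\<Sum>u\<in>U. const s * Var (fst (S u), c) * VarInv (S u) * G s S i (snd (S u)) {w\<in>U. u < w})"
proof -
  have "G s S i c U = Var (i, c) + (\<Sum>u\<in>U. \<Sum>B\<in>Pow {w\<in>U. u < w}.
      const (s ^ card (insert u B)) * chain_term S i c (sorted_list_of_set (insert u B)))"
    unfolding G_def by (subst pow_split_min[OF U]) simp
  also have "\<dots> = Var (i, c) + (\<Sum>u\<in>U. const s * Var (fst (S u), c) * VarInv (S u) * G s S i (snd (S u)) {w\<in>U. u < w})"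
  proof (rule arg_cong[where f = "\<lambda>x. Var (i, c) + x"], rule sum.cong[OF refl])
    fix u assume "u \<in> U"
    have "(\<Sum>B\<in>Pow {w\<in>U. u < w}. const (s ^ card (insert u B)) * chain_term S i c (sorted_list_of_set (insert u B)))
      = (\<Sum>B\<in>Pow {w\<in>U. u < w}. const s * Var (fst (S u), c) * VarInv (S u) *
           (const (s ^ card B) * chain_term S i (snd (S u)) (sorted_list_of_set B)))"
    proof (rule sum.cong[OF refl])
      fix B assume B: "B \<in> Pow {w\<in>U. u < w}"
      have fB: "finite B" using B U by (auto intro: finite_subset[of B U])
      have uB: "u \<notin> B" using B by auto
      have "sorted_list_of_set (insert u B) = u # sorted_list_of_set B"
        using B fB by (intro sorted_insert_min) auto
      then show "const (s ^ card (insert u B)) * chain_term S i c (sorted_list_of_set (insert u B)) =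
          const s * Var (fst (S u), c) * VarInv (S u) * (const (s ^ card B) * chain_term S i (snd (S u)) (sorted_list_of_set B))"
        using fB uB by (simp add: const_mult mult_ac)
    qed
    then show "(\<Sum>B\<in>Pow {w\<in>U. u < w}. const (s ^ card (insert u B)) * chain_term S i c (sorted_list_of_set (insert u B)))
      = const s * Var (fst (S u), c) * VarInv (S u) * G s S i (snd (S u)) {w\<in>U. u < w}"
      by (simp add: G_def sum_distrib_left)
  qed
  finally show ?thesis .
qed

lemma G_last:
  assumes U: "finite U"
  shows "G s S i c U = Var (i, c) + (\<Sum>u\<in>U. const s * G s S (fst (S u)) c {w\<in>U. w < u} * VarInv (S u) * Var (i, snd (S u)))"
proof -
  have "G s S i c U = Var (i, c) + (\<Sum>u\<in>U. \<Sum>B\<in>Pow {w\<in>U. w < u}.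
      const (s ^ card (insert u B)) * chain_term S i c (sorted_list_of_set (insert u B)))"
    unfolding G_def by (subst pow_split_max[OF U]) simp
  also have "\<dots> = Var (i, c) + (\<Sum>u\<in>U. const s * G s S (fst (S u)) c {w\<in>U. w < u} * VarInv (S u) * Var (i, snd (S u)))"
  proof (rule arg_cong[where f = "\<lambda>x. Var (i, c) + x"], rule sum.cong[OF refl])
    fix u assume "u \<in> U"
    have "(\<Sum>B\<in>Pow {w\<in>U. w < u}. const (s ^ card (insert u B)) * chain_term S i c (sorted_list_of_set (insert u B)))
      = (\<Sum>B\<in>Pow {w\<in>U. w < u}. (const (s ^ card B) * chain_term S (fst (S u)) c (sorted_list_of_set B)) *
           (const s * VarInv (S u) * Var (i, snd (S u))))"
    proof (rule sum.cong[OF refl])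
      fix B assume B: "B \<in> Pow {w\<in>U. w < u}"
      have fB: "finite B" using B U by (auto intro: finite_subset[of B U])
      have uB: "u \<notin> B" using B by auto
      have "sorted_list_of_set (insert u B) = sorted_list_of_set B @ [u]"
        using B fB by (intro sorted_insert_max) auto
      then show "const (s ^ card (insert u B)) * chain_term S i c (sorted_list_of_set (insert u B)) =
          (const (s ^ card B) * chain_term S (fst (S u)) c (sorted_list_of_set B)) * (const s * VarInv (S u) * Var (i, snd (S u)))"
        using fB uB by (simp add: const_mult mult_ac chain_append)
    qed
    also have "\<dots> = (\<Sum>B\<in>Pow {w\<in>U. w < u}. const (s ^ card B) * chain_term S (fst (S u)) c (sorted_list_of_set B)) *
           (const s * VarInv (S u) * Var (i, snd (S u)))"
      by (rule sum_distrib_right[symmetric])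
    also have "\<dots> = const s * G s S (fst (S u)) c {w\<in>U. w < u} * VarInv (S u) * Var (i, snd (S u))"
      unfolding G_def by (simp only: mult_ac)
    finally show "(\<Sum>B\<in>Pow {w\<in>U. w < u}. const (s ^ card (insert u B)) * chain_term S i c (sorted_list_of_set (insert u B)))
      = const s * G s S (fst (S u)) c {w\<in>U. w < u} * VarInv (S u) * Var (i, snd (S u))" .
  qed
  finally show ?thesis .
qed



lemma smono:
  fixes w w' :: nat and S :: "nat \<Rightarrow> nat \<times> nat"
  assumes M: "\<forall>w\<in>{1..h}. fst (S w) < fst (S (w+1)) \<and> snd (S w) > snd (S (w+1))"
  shows "1 \<le> w \<Longrightarrow> w < w' \<Longrightarrow> w' \<le> h + 1 \<Longrightarrow> fst (S w) < fst (S w') \<and> snd (S w') < snd (S w)"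
proof (induction w')
  case 0 then show ?case by simp
next
  case (Suc w')
  have "w' \<in> {1..h}" using Suc.prems by simp
  from bspec[OF M this] have hw: "fst (S w') < fst (S (Suc w'))" "snd (S (Suc w')) < snd (S w')"
    by simp_all
  show ?case
  proof (cases "w = w'")
    case True then show ?thesis using hw by simp
  next
    case False
    then have "w < w'" using Suc.prems by simp
    then have ih: "fst (S w) < fst (S w')" "snd (S w') < snd (S w)" using Suc.IH Suc.prems by simp_all
    show ?thesis using less_trans[OF ih(1) hw(1)] less_trans[OF hw(2) ih(2)] by simp
  qed
qed

locale corners =
  fixes S :: "nat \<Rightarrow> nat \<times> nat" and h :: nat
  assumes M: "\<forall>w\<in>{1..h}. fst (S w) < fst (S (w+1)) \<and> snd (S w) > snd (S (w+1))"
begin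

lemma mono1: "w \<in> {1..h+1} \<Longrightarrow> w' \<in> {1..h+1} \<Longrightarrow> w < w' \<Longrightarrow> fst (S w) < fst (S w')"
  using smono[OF M, of w w'] by auto

lemma mono2: "w \<in> {1..h+1} \<Longrightarrow> w' \<in> {1..h+1} \<Longrightarrow> w < w' \<Longrightarrow> snd (S w') < snd (S w)"
  using smono[OF M, of w w'] by auto

lemma fst_less_iff: "w \<in> {1..h+1} \<Longrightarrow> w' \<in> {1..h+1} \<Longrightarrow> fst (S w) < fst (S w') \<longleftrightarrow> w < w'"
  using mono1[of w w'] mono1[of w' w] by (cases "w < w'"; cases "w' < w") auto

lemma snd_less_iff: "w \<in> {1..h+1} \<Longrightarrow> w' \<in> {1..h+1} \<Longrightarrow> snd (S w') < snd (S w) \<longleftrightarrow> w < w'"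
  using mono2[of w w'] mono2[of w' w] by (cases "w < w'"; cases "w' < w") auto

lemma U1: "u \<in> U_set S h i j \<Longrightarrow> U_set S h i (snd (S u)) = {w \<in> U_set S h i j. u < w}"
  unfolding U_set_def
proof (intro set_eqI iffI)
  fix w assume u: "u \<in> {w \<in> {1..h + 1}. fst (S w) < i \<and> snd (S w) < j}"
  { assume w: "w \<in> {w \<in> {1..h + 1}. fst (S w) < i \<and> snd (S w) < snd (S u)}"
    then have "u < w" using snd_less_iff[of u w] u by auto
    then show "w \<in> {w \<in> {w \<in> {1..h + 1}. fst (S w) < i \<and> snd (S w) < j}. u < w}" using w u by auto }
  { assume w: "w \<in> {w \<in> {w \<in> {1..h + 1}. fst (S w) < i \<and> snd (S w) < j}. u < w}"
    then have "snd (S w) < snd (S u)" using snd_less_iff[of u w] u by auto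
    then show "w \<in> {w \<in> {1..h + 1}. fst (S w) < i \<and> snd (S w) < snd (S u)}" using w by auto }
qed

lemma U2: "u \<in> U_set S h i j \<Longrightarrow> U_set S h (fst (S u)) j = {w \<in> U_set S h i j. w < u}"
  unfolding U_set_def
proof (intro set_eqI iffI)
  fix w assume u: "u \<in> {w \<in> {1..h + 1}. fst (S w) < i \<and> snd (S w) < j}"
  { assume w: "w \<in> {w \<in> {1..h + 1}. fst (S w) < fst (S u) \<and> snd (S w) < j}"
    then have "w < u" using fst_less_iff[of w u] u by auto
    then show "w \<in> {w \<in> {w \<in> {1..h + 1}. fst (S w) < i \<and> snd (S w) < j}. w < u}" using w u by auto }
  { assume w: "w \<in> {w \<in> {w \<in> {1..h + 1}. fst (S w) < i \<and> snd (S w) < j}. w < u}"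
    then have "fst (S w) < fst (S u)" using fst_less_iff[of w u] u by auto
    then show "w \<in> {w \<in> {1..h + 1}. fst (S w) < fst (S u) \<and> snd (S w) < j}" using w by auto }
qed

lemma U0: "w \<in> {1..h+1} \<Longrightarrow> U_set S h (fst (S w)) (snd (S w)) = {}"
  unfolding U_set_def using fst_less_iff snd_less_iff by fastforce

lemma img_first: "img (s::'k::field) S h (i,j) = Var (i,j) + (\<Sum>u\<in>U_set S h i j.
    const s * Var (fst (S u), j) * VarInv (S u) * img s S h (i, snd (S u)))"
proof -
  have "img s S h (i,j) = G s S i j (U_set S h i j)" by (rule img_G)
  also have "\<dots> = Var (i, j) + (\<Sum>u\<in>U_set S h i j. const s * Var (fst (S u), j) * VarInv (S u) * G s S i (snd (S u)) {w\<in>U_set S h i j. u < w})"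
    by (rule G_first[OF finite_U])
  also have "\<dots> = Var (i,j) + (\<Sum>u\<in>U_set S h i j.
    const s * Var (fst (S u), j) * VarInv (S u) * img s S h (i, snd (S u)))"
    by (intro arg_cong[where f="\<lambda>x. Var (i,j) + x"] sum.cong refl) (simp add: U1 img_G)
  finally show ?thesis .
qed

lemma img_last: "img (s::'k::field) S h (i,j) = Var (i,j) + (\<Sum>u\<in>U_set S h i j.
    const s * img s S h (fst (S u), j) * VarInv (S u) * Var (i, snd (S u)))"
proof -
  have "img s S h (i,j) = G s S i j (U_set S h i j)" by (rule img_G)
  also have "\<dots> = Var (i, j) + (\<Sum>u\<in>U_set S h i j. const s * G s S (fst (S u)) j {w\<in>U_set S h i j. w < u} * VarInv (S u) * Var (i, snd (S u)))"
    by (rule G_last[OF finite_U])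
  also have "\<dots> = Var (i,j) + (\<Sum>u\<in>U_set S h i j.
    const s * img s S h (fst (S u), j) * VarInv (S u) * Var (i, snd (S u)))"
    by (intro arg_cong[where f="\<lambda>x. Var (i,j) + x"] sum.cong refl) (simp add: U2 img_G)
  finally show ?thesis .
qed

lemma img_fixes: "fixes_on (S ` {1..h+1}) (img (s::'k::field) S h)"
  unfolding fixes_on_def
proof
  fix v assume "v \<in> S ` {1..h+1}"
  then obtain w where w: "w \<in> {1..h+1}" "v = S w" by blast
  obtain a b where ab: "S w = (a, b)" by (cases "S w")
  have "U_set S h a b = {}" using U0[OF w(1)] ab by simp
  then have "img s S h (a, b) = Var (a, b)" by (simp add: img_def)
  then show "img s S h v = Var v" using w ab by simp
qed

lemma chain_univ: "set us \<subseteq> {1..h+1} \<Longrightarrow> (chain_term S i c us :: 'k::field laurent) \<in> loc_ring UNIV (S ` {1..h+1})"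
proof (induction us arbitrary: c)
  case Nil then show ?case by (simp add: loc_ring_Var)
next
  case (Cons u us)
  then show ?case
    by (auto intro!: loc_ring_mult loc_ring_Var loc_ring_VarInv)
qed

lemma img_univ: "(img s S h v :: 'k::field laurent) \<in> loc_ring UNIV (S ` {1..h+1})"
proof -
  obtain i j where v: "v = (i,j)" by (cases v)
  have "set (sorted_list_of_set A) \<subseteq> {1..h+1}" if "A \<in> Pow (U_set S h i j) - {{}}" for A
  proof -
    have fA: "finite A" using that finite_U[of S h i j] finite_subset by auto
    then show ?thesis using that by (auto simp: U_set_def)
  qed
  then have "(\<Sum>A\<in>Pow (U_set S h i j) - {{}}. const (s ^ card A) * chain_term S i j (sorted_list_of_set A))
      \<in> loc_ring UNIV (S ` {1..h+1})"
    by (intro loc_ring_sum loc_ring_mult loc_ring_const chain_univ) simp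
  then show ?thesis unfolding v img_def
    by (simp add: loc_ring_add loc_ring_Var)
qed

lemma inv_var:
  assumes s: "s' = - (s::'k::field)"
  shows "subst (img s' S h) (img s S h (i,j)) = Var (i,j)"
proof (induction i arbitrary: j rule: less_induct)
  case (less i)
  let ?f = "img s' S h"
  let ?C = "S ` {1..h+1}"
  have fx: "fixes_on ?C ?f" by (rule img_fixes)
  have tm: "subst ?f (const s * img s S h (fst (S u), j) * VarInv (S u) * Var (i, snd (S u)))
      = const s * Var (fst (S u), j) * VarInv (S u) * img s' S h (i, snd (S u))"
    if u: "u \<in> U_set S h i j" for u
  proof -
    have u1: "u \<in> {1..h+1}" and lt: "fst (S u) < i" using u by (auto simp: U_set_def)
    have SC: "S u \<in> ?C" using u1 by blast
    have m1: "const s * img s S h (fst (S u), j) \<in> loc_ring UNIV ?C"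
      by (intro loc_ring_mult loc_ring_const img_univ)
    have m2: "const s * img s S h (fst (S u), j) * VarInv (S u) \<in> loc_ring UNIV ?C"
      by (intro loc_ring_mult m1 loc_ring_VarInv SC) simp
    have "subst ?f (const s * img s S h (fst (S u), j) * VarInv (S u) * Var (i, snd (S u)))
      = subst ?f (const s) * subst ?f (img s S h (fst (S u), j)) * subst ?f (VarInv (S u)) * subst ?f (Var (i, snd (S u)))"
      using subst_mult[OF fx m2 loc_ring_Var[of _ UNIV]] subst_mult[OF fx m1 loc_ring_VarInv[of _ UNIV]]
        subst_mult[OF fx loc_ring_const img_univ] SC by simp
    also have "\<dots> = const s * Var (fst (S u), j) * VarInv (S u) * img s' S h (i, snd (S u))"
      using less[OF lt] by (simp add: subst_const subst_VarInv subst_Var)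
    finally show ?thesis .
  qed
  have "subst ?f (img s S h (i,j)) = ?f (i,j) + (\<Sum>u\<in>U_set S h i j.
      const s * Var (fst (S u), j) * VarInv (S u) * img s' S h (i, snd (S u)))"
    by (subst img_last) (simp add: subst_add subst_sum subst_Var tm)
  also have "\<dots> = Var (i,j) + (\<Sum>u\<in>U_set S h i j. (const s' + const s) *
      (Var (fst (S u), j) * VarInv (S u) * img s' S h (i, snd (S u))))"
    by (subst img_first) (simp add: add.assoc sum.distrib[symmetric] distrib_right mult.assoc)
  also have "\<dots> = Var (i,j)"
    using s by (simp add: const_add[symmetric])
  finally show ?case .
qed

end



context corners
begin

lemma chain_Y:
  assumes lc: "ladder_closed Y" and SY: "\<forall>w\<in>{1..h+1}. S w \<in> Y" and SC: "\<forall>w\<in>{1..h+1}. S w \<in> Cs"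
  shows "(i,c) \<in> Y \<Longrightarrow> sorted_wrt (<) us \<Longrightarrow> \<forall>u\<in>set us. u \<in> {1..h+1} \<and> fst (S u) < i \<and> snd (S u) < c
    \<Longrightarrow> (chain_term S i c us :: 'k::field laurent) \<in> loc_ring Y Cs"
proof (induction us arbitrary: c)
  case Nil then show ?case by (simp add: loc_ring_Var)
next
  case (Cons u us)
  have u: "u \<in> {1..h+1}" "fst (S u) < i" "snd (S u) < c" using Cons.prems by auto
  obtain a b where ab: "S u = (a, b)" by (cases "S u")
  have abY: "(a, b) \<in> Y" using SY u(1) ab by metis
  have "(a, c) \<in> Y \<and> (i, b) \<in> Y"
    using lc abY Cons.prems(1) u ab unfolding ladder_closed_def by (metis fst_conv snd_conv less_imp_le)
  then have Y1: "(fst (S u), c) \<in> Y" and Y2: "(i, snd (S u)) \<in> Y" using ab by auto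
  have rest: "\<forall>w\<in>set us. w \<in> {1..h+1} \<and> fst (S w) < i \<and> snd (S w) < snd (S u)"
  proof
    fix w assume w: "w \<in> set us"
    have "u < w" using Cons.prems(2) w by simp
    then have "snd (S w) < snd (S u)" using mono2[OF u(1)] Cons.prems(3) w by auto
    then show "w \<in> {1..h+1} \<and> fst (S w) < i \<and> snd (S w) < snd (S u)" using Cons.prems(3) w by auto
  qed
  have ih: "(chain_term S i (snd (S u)) us :: 'k laurent) \<in> loc_ring Y Cs"
    using Cons.IH[OF Y2 _ rest] Cons.prems(2) by simp
  have "S u \<in> Y" "S u \<in> Cs" using SY SC u(1) by auto
  then show ?case
    using ih Y1 by (simp add: loc_ring_mult loc_ring_Var loc_ring_VarInv)
qed

lemma img_Y:
  assumes lc: "ladder_closed Y" and SY: "\<forall>w\<in>{1..h+1}. S w \<in> Y" and SC: "\<forall>w\<in>{1..h+1}. S w \<in> Cs"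
    and v: "v \<in> Y"
  shows "(img s S h v :: 'k::field laurent) \<in> loc_ring Y Cs"
proof -
  obtain i j where ij: "v = (i,j)" by (cases v)
  have "const (s ^ card A) * (chain_term S i j (sorted_list_of_set A) :: 'k laurent) \<in> loc_ring Y Cs"
    if A: "A \<in> Pow (U_set S h i j) - {{}}" for A
  proof -
    have fA: "finite A" using A finite_U[of S h i j] finite_subset by auto
    have "\<forall>u\<in>set (sorted_list_of_set A). u \<in> {1..h+1} \<and> fst (S u) < i \<and> snd (S u) < j"
      using A fA by (auto simp: U_set_def)
    then have "(chain_term S i j (sorted_list_of_set A) :: 'k laurent) \<in> loc_ring Y Cs"
      using chain_Y[OF lc SY SC, of i j "sorted_list_of_set A"] v ij by simp
    then show ?thesis by (intro loc_ring_mult loc_ring_const)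
  qed
  then have "(\<Sum>A\<in>Pow (U_set S h i j) - {{}}. const (s ^ card A) * chain_term S i j (sorted_list_of_set A))
      \<in> loc_ring Y Cs"
    by (intro loc_ring_sum) simp
  then show ?thesis unfolding ij img_def using v ij
    by (simp add: loc_ring_add loc_ring_Var)
qed

end

theorem lemmaA13:
  fixes m n t h :: nat and Y :: "(nat \<times> nat) set" and S :: "nat \<Rightarrow> nat \<times> nat"
  assumes "is_ladder m n Y"
    and "t > 2"
    and "t_connected t Y"
    and "S ` {1..h+1} = lower_outside_corners Y"
    and "\<forall>w\<in>{1..h}. fst (S w) < fst (S (w+1)) \<and> snd (S w) > snd (S (w+1))"
  defines "R \<equiv> (loc_ring Y (lower_outside_corners Y) :: 'k::field laurent set)"
  shows "psi S h ` R \<subseteq> R \<and> chi S h ` R \<subseteq> R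
    \<and> is_k_alg_hom_on R (psi S h) \<and> is_k_alg_hom_on R (chi S h)
    \<and> (\<forall>p\<in>R. psi S h (chi S h p) = p \<and> chi S h (psi S h p) = p)"
proof -
  interpret corners S h using assms(5) by unfold_locales
  let ?C = "lower_outside_corners Y"
  have C: "?C = S ` {1..h+1}" using assms(4) by simp
  have CY: "?C \<subseteq> Y" by (auto simp: lower_outside_corners_def)
  have lc: "ladder_closed Y" using assms(1) by (simp add: is_ladder_def)
  have SC: "\<forall>w\<in>{1..h+1}. S w \<in> ?C" using C by auto
  have SY: "\<forall>w\<in>{1..h+1}. S w \<in> Y" using SC CY by auto
  have fx: "fixes_on ?C (img (s::'k) S h)" for s using img_fixes[of s] C by simp
  have univ: "(img (s::'k) S h v) \<in> loc_ring UNIV ?C" for s v using img_univ[of s v] C by simp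
  have inR: "img (s::'k) S h v \<in> R" if "v \<in> Y" for s v
    unfolding R_def by (rule img_Y[OF lc SY SC that])
  have clos: "subst (img (s::'k) S h) p \<in> R" if "p \<in> R" for s p
    using subst_closed[OF that[unfolded R_def] CY] inR unfolding R_def by blast
  have hom: "is_k_alg_hom_on R (subst (img (s::'k) S h))" for s
    unfolding R_def by (rule subst_hom[OF fx])
  have inv: "subst (img s' S h) (subst (img s S h) p) = p" if "p \<in> R" and s: "s' = - (s::'k)" for s s' p
  proof -
    have "subst (img s' S h) (subst (img s S h) p) = subst (\<lambda>v. subst (img s' S h) (img s S h v)) p"
      using subst_comp[OF fx univ that(1)[unfolded R_def]] .
    also have "(\<lambda>v. subst (img s' S h) (img s S h v)) = Var"
    proof
      fix v :: "nat \<times> nat"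
      obtain i j where "v = (i,j)" by (cases v)
      then show "subst (img s' S h) (img s S h v) = Var v" using inv_var[OF s] by simp
    qed
    finally show ?thesis by (simp add: subst_Var_id)
  qed
  show ?thesis
    unfolding psi_def chi_def
    using clos hom inv[of _ 1 "-1"] inv[of _ "-1" 1] by auto
qed


end
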